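(* Let $\Gamma$ be a connected, undirected graph without loops on $n\ge 2$ nodes, with adjacency matrix $\mathbf A$, degree matrix $\mathbf K=\mathrm{diag}\{k_i\}$ and Laplacian $\mathbf L=\mathbf K-\mathbf A$. Let $$\mathbf G=\begin{bmatrix}\mathbf 0 & \mathbf I\\ -\mathbf I & -\mathbf L\end{bmatrix}\in\mathbb R^{2n\times 2n},$$ and let $\mathbf U=\mathbf G(\mathbf G^{T}\mathbf G)^{-1/2}$ be the orthogonal factor of the polar decomposition $\mathbf G=\mathbf U\mathbf P$, $\mathbf P=(\mathbf G^T\mathbf G)^{1/2}$. For any initial condition $\mathbf y_0=(\mathbf x_0,\mathbf v_0)\in\mathbb R^{2n}$ define $$\tilde{\mathbf y}(t)=\frac1n\begin{pmatrix}\cos t\,\mathbf 1\mathbf x_0+\sin t\,\mathbf 1\mathbf v_0\\ -\sin t\,\mathbf 1\mathbf x_0+\cos t\,\mathbf 1\mathbf v_0\end{pmatrix},$$ where $\mathbf 1$ is the $n\times n$ matrix of all ones. Then both $e^{\mathbf G t}\mathbf y_0$ and $e^{\mathbf U t}\mathbf y_0$ have the same asymptotic behavior $\tilde{\mathbf y}(t)$ as $t\to+\infty$, i.e. $e^{\mathbf G t}\mathbf y_0-\tilde{\mathbf y}(t)\to \mathbf 0$ and $e^{\mathbf U t}\mathbf y_0-\tilde{\mathbf y}(t)\to\mathbf 0$ as $t\to+\infty$.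
   Context: $\mathbf G^T\mathbf G$ is symmetric positive definite, so $(\mathbf G^T\mathbf G)^{\pm1/2}$ denote its positive definite square root and its inverse. $\mathbf I$ and $\mathbf 0$ are the $n\times n$ identity and zero matrices. The system $\dot{\mathbf y}=\mathbf G\mathbf y$ models $n$ identical unit-mass harmonic oscillators coupled by dampers along the edges of $\Gamma$. *)

theory Defs
  imports "HOL-Analysis.Analysis"
begin

definition adj_matrix :: "('n::finite \<Rightarrow> 'n \<Rightarrow> bool) \<Rightarrow> real^'n^'n" where
  "adj_matrix E = (\<chi> i j. if E i j then 1 else 0)"

definition degree_matrix :: "('n::finite \<Rightarrow> 'n \<Rightarrow> bool) \<Rightarrow> real^'n^'n" where
  "degree_matrix E = (\<chi> i j. if i = j then real (card {k. E i k}) else 0)"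

definition laplacian :: "('n::finite \<Rightarrow> 'n \<Rightarrow> bool) \<Rightarrow> real^'n^'n" where
  "laplacian E = degree_matrix E - adj_matrix E"

text \<open>The 2n x 2n block matrix G = [[0, I], [-I, -L]], indices Inl = position block, Inr = velocity block.\<close>

definition block_G :: "real^'n^'n \<Rightarrow> real^('n::finite + 'n)^('n + 'n)" where
  "block_G L = (\<chi> a b. case (a, b) of
       (Inl i, Inl j) \<Rightarrow> 0
     | (Inl i, Inr j) \<Rightarrow> (if i = j then 1 else 0)
     | (Inr i, Inl j) \<Rightarrow> (if i = j then -1 else 0)
     | (Inr i, Inr j) \<Rightarrow> - (L $ i $ j))"

primrec mat_pow :: "real^'n^'n \<Rightarrow> nat \<Rightarrow> real^'n^'n" where
  "mat_pow M 0 = mat 1"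
| "mat_pow M (Suc k) = M ** mat_pow M k"

definition mat_exp :: "real^'n::finite^'n \<Rightarrow> real^'n^'n" where
  "mat_exp M = (\<Sum>k. (1 / fact k) *\<^sub>R mat_pow M k)"

definition pos_def_matrix :: "real^'n::finite^'n \<Rightarrow> bool" where
  "pos_def_matrix P \<longleftrightarrow> transpose P = P \<and> (\<forall>x. x \<noteq> 0 \<longrightarrow> 0 < x \<bullet> (P *v x))"

definition mat_sqrt :: "real^'n::finite^'n \<Rightarrow> real^'n^'n" where
  "mat_sqrt M = (THE P. pos_def_matrix P \<and> P ** P = M)"

definition polar_U :: "real^'n::finite^'n \<Rightarrow> real^'n^'n" where
  "polar_U G = G ** matrix_inv (mat_sqrt (transpose G ** G))"

definition y_tilde :: "real^('n::finite + 'n) \<Rightarrow> real \<Rightarrow> real^('n + 'n)" where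
  "y_tilde y0 t = (let sx = (\<Sum>i\<in>UNIV. y0 $ Inl i); sv = (\<Sum>i\<in>UNIV. y0 $ Inr i);
                       n = real CARD('n) in
     (\<chi> a. case a of
        Inl i \<Rightarrow> (cos t * sx + sin t * sv) / n
      | Inr i \<Rightarrow> (- sin t * sx + cos t * sv) / n))"

end

theory Submission imports Defs begin

definition m1 :: "real^'n::finite^'m::finite \<Rightarrow> real" where
  "m1 A = (\<Sum>i\<in>UNIV. \<Sum>j\<in>UNIV. \<bar>A$i$j\<bar>)"

lemma norm_le_m1: "norm A \<le> m1 A"
proof -
  have "norm A \<le> (\<Sum>i\<in>UNIV. norm (A$i))" unfolding norm_vec_def by (rule L2_set_le_sum) auto
  also have "\<dots> \<le> (\<Sum>i\<in>UNIV. \<Sum>j\<in>UNIV. \<bar>A$i$j\<bar>)" by (intro sum_mono norm_le_l1_cart)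
  finally show ?thesis unfolding m1_def .
qed

lemma m1_nonneg: "0 \<le> m1 A" by (simp add: m1_def sum_nonneg)

lemma m1_mult: "m1 (A ** B) \<le> m1 A * m1 B"
proof -
  have "m1 (A ** B) = (\<Sum>i\<in>UNIV. \<Sum>j\<in>UNIV. \<bar>\<Sum>k\<in>UNIV. A$i$k * B$k$j\<bar>)"
    by (simp add: m1_def matrix_matrix_mult_def)
  also have "\<dots> \<le> (\<Sum>i\<in>UNIV. \<Sum>j\<in>UNIV. \<Sum>k\<in>UNIV. \<bar>A$i$k\<bar> * \<bar>B$k$j\<bar>)"
    by (intro sum_mono) (metis (no_types, lifting) abs_mult sum.cong sum_abs)
  also have "\<dots> = (\<Sum>i\<in>UNIV. \<Sum>k\<in>UNIV. \<bar>A$i$k\<bar> * (\<Sum>j\<in>UNIV. \<bar>B$k$j\<bar>))"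
    by (simp add: sum_distrib_left) (rule sum.cong, simp, rule sum.swap)
  also have "\<dots> \<le> (\<Sum>i\<in>UNIV. \<Sum>k\<in>UNIV. \<bar>A$i$k\<bar> * m1 B)"
  proof (intro sum_mono mult_left_mono)
    fix k
    show "(\<Sum>j\<in>UNIV. \<bar>B$k$j\<bar>) \<le> m1 B" unfolding m1_def
      by (rule member_le_sum) (auto intro: sum_nonneg)
  qed auto
  also have "\<dots> = m1 A * m1 B" by (simp add: m1_def sum_distrib_right)
  finally show ?thesis .
qed

lemma m1_pow: "m1 (mat_pow (M::real^'n::finite^'n) k) \<le> m1 (mat 1 :: real^'n::finite^'n) * m1 M ^ k"
proof (induction k)
  case 0 then show ?case by simp
next
  case (Suc k)
  have "m1 (mat_pow M (Suc k)) \<le> m1 M * m1 (mat_pow M k)" using m1_mult by simp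
  also have "\<dots> \<le> m1 M * (m1 (mat 1 :: real^'n::finite^'n) * m1 M ^ k)"
    using Suc by (intro mult_left_mono) (auto simp: m1_nonneg)
  finally show ?case by (simp add: algebra_simps)
qed

lemma mat_exp_summable: "summable (\<lambda>k. (1 / fact k) *\<^sub>R mat_pow (M::real^'n::finite^'n) k)"
proof (rule summable_comparison_test)
  show "\<exists>N. \<forall>k\<ge>N. norm ((1 / fact k) *\<^sub>R mat_pow M k) \<le> m1 (mat 1 :: real^'n^'n) * (inverse (fact k) * m1 M ^ k)"
  proof (intro exI allI impI)
    fix k :: nat
    have "norm ((1 / fact k) *\<^sub>R mat_pow M k) = (1 / fact k) * norm (mat_pow M k)" by simp
    also have "\<dots> \<le> (1 / fact k) * (m1 (mat 1 :: real^'n^'n) * m1 M ^ k)"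
      by (intro mult_left_mono order_trans[OF norm_le_m1 m1_pow]) auto
    finally show "norm ((1 / fact k) *\<^sub>R mat_pow M k) \<le> m1 (mat 1 :: real^'n^'n) * (inverse (fact k) * m1 M ^ k)"
      by (simp add: field_simps)
  qed
  show "summable (\<lambda>k. m1 (mat 1 :: real^'n^'n) * (inverse (fact k) * m1 M ^ k))"
    by (intro summable_mult summable_exp)
qed

lemma mat_pow_scale: "mat_pow (t *\<^sub>R M) k = t ^ k *\<^sub>R mat_pow M k"
  by (induction k) (simp_all add: matrix_scalar_ac scalar_matrix_assoc[symmetric])

lemma scaleR_mat_vec: "(c *\<^sub>R A) *v x = c *\<^sub>R (A *v (x::real^'n::finite))"
  by (simp add: vec_eq_iff matrix_vector_mult_def sum_distrib_left mult.assoc)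

lemma bounded_linear_mv: "bounded_linear (\<lambda>A::real^'n::finite^'m::finite. A *v z)"
proof -
  have "linear (\<lambda>A::real^'n::finite^'m::finite. A *v z)"
    by (rule linearI) (simp_all add: matrix_vector_mult_add_rdistrib scaleR_mat_vec)
  then show ?thesis by (simp add: linear_conv_bounded_linear)
qed

lemma mat_exp_sums:
  "(\<lambda>k. (t ^ k / fact k) *\<^sub>R (mat_pow M k *v z)) sums (mat_exp (t *\<^sub>R M) *v z)"
proof -
  have "(\<lambda>k. (1 / fact k) *\<^sub>R mat_pow (t *\<^sub>R M) k) sums mat_exp (t *\<^sub>R M)"
    unfolding mat_exp_def by (rule summable_sums[OF mat_exp_summable])
  from bounded_linear.sums[OF bounded_linear_mv this, of z]
  show ?thesis by (simp add: mat_pow_scale scaleR_mat_vec)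
qed

lemma mat_exp_eqI:
  "(\<lambda>k. (t ^ k / fact k) *\<^sub>R (mat_pow M k *v z)) sums X \<Longrightarrow> mat_exp (t *\<^sub>R M) *v z = X"
  using mat_exp_sums sums_unique2 by blast



lemma quad_zero:
  fixes a c :: real
  assumes "\<And>s. 2 * s * a + s^2 * c \<le> 0"
  shows "a = 0"
proof (rule ccontr)
  assume "a \<noteq> 0"
  define s where "s = a / (\<bar>c\<bar> + 1)"
  have pos: "\<bar>c\<bar> + 1 > 0" by simp
  have "2 * s * a + s^2 * c \<le> 0" using assms by blast
  then have "(2 * s * a + s^2 * c) * (\<bar>c\<bar> + 1)^2 \<le> 0"
    by (simp add: mult_nonpos_nonneg)
  also have "(2 * s * a + s^2 * c) * (\<bar>c\<bar> + 1)^2 = 2*a*(s*(\<bar>c\<bar> + 1))*(\<bar>c\<bar> + 1) + (s*(\<bar>c\<bar> + 1))^2 * c"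
    by (simp add: power2_eq_square algebra_simps)
  also have "s*(\<bar>c\<bar> + 1) = a" unfolding s_def using pos by simp
  also have "2*a*a*(\<bar>c\<bar> + 1) + a^2 * c = a^2 * (2*(\<bar>c\<bar>+1) + c)"
    by (simp add: power2_eq_square algebra_simps)
  finally have "a^2 * (2*(\<bar>c\<bar>+1) + c) \<le> 0" .
  moreover have "a^2 > 0" using \<open>a \<noteq> 0\<close> by simp
  moreover have "2*(\<bar>c\<bar>+1) + c > 0" by (simp add: abs_if)
  ultimately show False by (simp add: mult_le_0_iff)
qed

lemma inner_mv_sym:
  fixes A :: "real^'n::finite^'n"
  assumes "transpose A = A"
  shows "x \<bullet> (A *v y) = (A *v x) \<bullet> y"
  by (metis assms dot_lmul_matrix transpose_matrix_vector)

lemma spectral_sub: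
  fixes A :: "real^'n::finite^'n"
  assumes sym: "transpose A = A"
  shows "subspace V \<Longrightarrow> (\<forall>x\<in>V. A *v x \<in> V) \<Longrightarrow>
    \<exists>B. B \<subseteq> V \<and> finite B \<and> (\<forall>b\<in>B. norm b = 1) \<and> (\<forall>b\<in>B. \<forall>c\<in>B. b \<noteq> c \<longrightarrow> b \<bullet> c = 0)
      \<and> (\<forall>b\<in>B. A *v b = (b \<bullet> (A *v b)) *\<^sub>R b) \<and> V \<subseteq> span B"
proof (induction "dim V" arbitrary: V rule: less_induct)
  case less
  note sub = less.prems(1) and inv = less.prems(2)
  show ?case
  proof (cases "V \<subseteq> {0}")
    case True then show ?thesis by (intro exI[of _ "{}"]) auto
  next
    case False
    then obtain v where v: "v \<in> V" "v \<noteq> 0" by auto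
    define S where "S = sphere (0::real^'n) 1 \<inter> V"
    have cS: "compact S" unfolding S_def
      by (intro compact_Int_closed closed_subspace sub compact_sphere)
    have "(1 / norm v) *\<^sub>R v \<in> S" unfolding S_def using v sub
      by (auto simp: subspace_scale)
    then have nS: "S \<noteq> {}" by auto
    have blA: "bounded_linear (\<lambda>x. A *v x)"
      by (simp add: linear_conv_bounded_linear)
    have "continuous_on S (\<lambda>x. x \<bullet> (A *v x))"
      by (intro continuous_intros linear_continuous_on blA)
    from continuous_attains_sup[OF cS nS this]
    obtain x0 where x0S: "x0 \<in> S" and mx: "\<And>y. y \<in> S \<Longrightarrow> y \<bullet> (A *v y) \<le> x0 \<bullet> (A *v x0)"
      by blast
    define \<mu> where "\<mu> = x0 \<bullet> (A *v x0)"
    have x0V: "x0 \<in> V" and nx0: "norm x0 = 1" using x0S by (auto simp: S_def)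
    have x0x0: "x0 \<bullet> x0 = 1" using nx0 by (simp add: dot_square_norm)
    have orth: "y \<bullet> (A *v x0) = 0" if yV: "y \<in> V" and yo: "x0 \<bullet> y = 0" for y
    proof (rule quad_zero[where c = "y \<bullet> (A *v y) - \<mu> * (y \<bullet> y)"])
      fix s :: real
      define z where "z = x0 + s *\<^sub>R y"
      have zV: "z \<in> V" unfolding z_def using sub x0V yV by (simp add: subspace_add subspace_scale)
      have zz: "z \<bullet> z = 1 + s^2 * (y \<bullet> y)"
        unfolding z_def using x0x0 yo
        by (simp add: inner_add_left inner_add_right inner_commute power2_eq_square)
      then have zpos: "z \<bullet> z > 0" by (simp add: add_pos_nonneg)
      then have nz: "norm z > 0" by (simp add: dot_square_norm)
      have "(1 / norm z) *\<^sub>R z \<in> S" unfolding S_def using zV sub nz by (auto simp: subspace_scale)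
      from mx[OF this] have "(1 / norm z)^2 * (z \<bullet> (A *v z)) \<le> \<mu>"
        by (simp add: \<mu>_def matrix_vector_mult_scaleR power2_eq_square)
      moreover have "(1 / norm z)^2 = 1 / (z \<bullet> z)" by (simp add: dot_square_norm power_divide)
      ultimately have "z \<bullet> (A *v z) \<le> \<mu> * (z \<bullet> z)" using zpos
        by (simp add: divide_le_eq mult.commute)
      moreover have "z \<bullet> (A *v z) = \<mu> + 2 * s * (y \<bullet> (A *v x0)) + s^2 * (y \<bullet> (A *v y))"
      proof -
        have "x0 \<bullet> (A *v y) = y \<bullet> (A *v x0)"
          using inner_mv_sym[OF sym, of x0 y] by (simp add: inner_commute)
        then show ?thesis unfolding z_def \<mu>_def
          by (simp add: inner_add_left inner_add_right matrix_vector_right_distrib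
              matrix_vector_mult_scaleR power2_eq_square algebra_simps)
      qed
      ultimately show "2 * s * (y \<bullet> (A *v x0)) + s^2 * (y \<bullet> (A *v y) - \<mu> * (y \<bullet> y)) \<le> 0"
        using zz by (simp add: algebra_simps)
    qed
    have eig: "A *v x0 = \<mu> *\<^sub>R x0"
    proof -
      define w where "w = A *v x0 - \<mu> *\<^sub>R x0"
      have wV: "w \<in> V" unfolding w_def using inv x0V sub by (simp add: subspace_diff subspace_scale)
      have "x0 \<bullet> w = 0" unfolding w_def using x0x0 by (simp add: inner_diff_right \<mu>_def)
      from orth[OF wV this] have "w \<bullet> (A *v x0) = 0" .
      then have "w \<bullet> w = 0" using \<open>x0 \<bullet> w = 0\<close>
        unfolding w_def by (simp add: inner_diff_left inner_diff_right inner_commute)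
      then show ?thesis unfolding w_def by simp
    qed
    define V' where "V' = {y \<in> V. x0 \<bullet> y = 0}"
    have sub': "subspace V'" unfolding V'_def subspace_def using sub
      by (auto simp: subspace_0 subspace_add subspace_scale inner_add_right)
    have inv': "\<forall>x\<in>V'. A *v x \<in> V'"
    proof
      fix x assume "x \<in> V'"
      then have "x \<in> V" "x0 \<bullet> x = 0" by (auto simp: V'_def)
      moreover have "x0 \<bullet> (A *v x) = 0"
        using inner_mv_sym[OF sym, of x0 x] eig \<open>x0 \<bullet> x = 0\<close> by simp
      ultimately show "A *v x \<in> V'" using inv by (auto simp: V'_def)
    qed
    have "dim V' < dim V"
    proof (rule dim_psubset)
      have "x0 \<notin> V'" using x0x0 by (simp add: V'_def)
      then have "V' \<noteq> V" using x0V by blast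
      moreover have "V' \<subseteq> V" by (auto simp: V'_def)
      ultimately have ps: "V' \<subset> V" by blast
      have e1: "span V' = V'" "span V = V" using sub sub' span_eq_iff by blast+
      show "span V' \<subset> span V" unfolding e1 by (rule ps)
    qed
    from less.hyps[OF this sub' inv'] obtain B' where
      B': "B' \<subseteq> V'" "finite B'" "\<forall>b\<in>B'. norm b = 1" "\<forall>b\<in>B'. \<forall>c\<in>B'. b \<noteq> c \<longrightarrow> b \<bullet> c = 0"
        "\<forall>b\<in>B'. A *v b = (b \<bullet> (A *v b)) *\<^sub>R b" "V' \<subseteq> span B'" by blast
    show ?thesis
    proof (intro exI[of _ "insert x0 B'"] conjI)
      show "insert x0 B' \<subseteq> V" using B'(1) x0V by (auto simp: V'_def)
      show "finite (insert x0 B')" using B'(2) by simp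
      show "\<forall>b\<in>insert x0 B'. norm b = 1" using B'(3) nx0 by simp
      show "\<forall>b\<in>insert x0 B'. \<forall>c\<in>insert x0 B'. b \<noteq> c \<longrightarrow> b \<bullet> c = 0"
        using B'(1,4) by (auto simp: V'_def inner_commute)
      show "\<forall>b\<in>insert x0 B'. A *v b = (b \<bullet> (A *v b)) *\<^sub>R b"
        using B'(5) eig x0x0 by (simp add: \<mu>_def)
      show "V \<subseteq> span (insert x0 B')"
      proof
        fix y assume yV: "y \<in> V"
        have "y - (x0 \<bullet> y) *\<^sub>R x0 \<in> V'" unfolding V'_def using yV x0V sub x0x0
          by (simp add: subspace_diff subspace_scale inner_diff_right)
        then have "y - (x0 \<bullet> y) *\<^sub>R x0 \<in> span (insert x0 B')"
          using B'(6) span_mono[of B' "insert x0 B'"] by auto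
        moreover have "(x0 \<bullet> y) *\<^sub>R x0 \<in> span (insert x0 B')"
          by (simp add: span_base span_scale)
        ultimately have "(y - (x0 \<bullet> y) *\<^sub>R x0) + (x0 \<bullet> y) *\<^sub>R x0 \<in> span (insert x0 B')"
          by (rule span_add)
        then show "y \<in> span (insert x0 B')" by simp
      qed
    qed
  qed
qed



lemma spectral:
  fixes A :: "real^'n::finite^'n"
  assumes sym: "transpose A = A"
  obtains B where "finite B" "\<forall>b\<in>B. norm b = 1" "\<forall>b\<in>B. \<forall>c\<in>B. b \<noteq> c \<longrightarrow> b \<bullet> c = 0"
    "\<forall>b\<in>B. A *v b = (b \<bullet> (A *v b)) *\<^sub>R b" "\<And>x. x = (\<Sum>b\<in>B. (b \<bullet> x) *\<^sub>R b)"
proof -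
  from spectral_sub[OF sym, of UNIV] obtain B where
    B: "finite B" "\<forall>b\<in>B. norm b = 1" "\<forall>b\<in>B. \<forall>c\<in>B. b \<noteq> c \<longrightarrow> b \<bullet> c = 0"
    "\<forall>b\<in>B. A *v b = (b \<bullet> (A *v b)) *\<^sub>R b" "UNIV \<subseteq> span B"
    by auto
  have "x = (\<Sum>b\<in>B. (b \<bullet> x) *\<^sub>R b)" for x
  proof -
    have "x \<in> span B" using B(5) by auto
    then obtain u where u: "x = (\<Sum>v\<in>B. u v *\<^sub>R v)"
      using real_vector.span_finite[OF B(1)] by auto
    have "b \<bullet> x = u b" if "b \<in> B" for b
    proof -
      have "b \<bullet> x = (\<Sum>v\<in>B. u v * (b \<bullet> v))" unfolding u by (simp add: inner_sum_right)
      also have "\<dots> = u b * (b \<bullet> b) + (\<Sum>v\<in>B-{b}. u v * (b \<bullet> v))"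
        using sum.remove[OF B(1) that] by simp
      also have "(\<Sum>v\<in>B-{b}. u v * (b \<bullet> v)) = 0" using B(3) that by (intro sum.neutral) auto
      also have "b \<bullet> b = 1" using B(2) that by (simp add: dot_square_norm)
      finally show ?thesis by simp
    qed
    then show ?thesis using u by (metis (no_types, lifting) sum.cong)
  qed
  then show ?thesis using B that by blast
qed

definition one_vec :: "real^'n::finite" where "one_vec = (\<chi> i. 1)"

lemma one_vec_nth[simp]: "one_vec $ i = 1" by (simp add: one_vec_def)

locale graph =
  fixes E :: "'n::finite \<Rightarrow> 'n \<Rightarrow> bool"
  assumes symE: "\<And>i j. E i j \<longleftrightarrow> E j i"
    and conn: "\<And>i j. (i, j) \<in> {(a, b). E a b}\<^sup>*"
begin

abbreviation "L \<equiv> laplacian E"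

lemma L_apply: "(L *v x) $ i = (\<Sum>j\<in>UNIV. if E i j then x$i - x$j else 0)"
proof -
  define c where "c = real (card {k. E i k})"
  have deg: "c = (\<Sum>j\<in>UNIV. if E i j then 1 else 0)"
    unfolding c_def by (simp add: sum.If_cases)
  have S1: "(\<Sum>j\<in>UNIV. (if i = j then c else 0) * x$j) = c * x$i"
    by (subst sum.cong[OF refl, of _ _ "\<lambda>j. if i = j then c * x$j else 0"]) auto
  have S2: "(\<Sum>j\<in>UNIV. (if E i j then 1 else 0) * x$j) = (\<Sum>j\<in>UNIV. if E i j then x$j else 0)"
    by (rule sum.cong) auto
  have "(L *v x) $ i = (\<Sum>j\<in>UNIV. (if i = j then c else 0) * x$j)
       - (\<Sum>j\<in>UNIV. (if E i j then 1 else 0) * x$j)"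
    unfolding c_def by (simp add: laplacian_def degree_matrix_def adj_matrix_def matrix_vector_mult_def
        left_diff_distrib sum_subtractf)
  also have "\<dots> = c * x$i - (\<Sum>j\<in>UNIV. if E i j then x$j else 0)" by (simp only: S1 S2)
  also have "\<dots> = (\<Sum>j\<in>UNIV. (if E i j then 1 else 0) * x$i) - (\<Sum>j\<in>UNIV. if E i j then x$j else 0)"
    unfolding deg by (simp add: sum_distrib_left sum_distrib_right mult.commute)
  also have "\<dots> = (\<Sum>j\<in>UNIV. if E i j then x$i - x$j else 0)"
    by (simp add: sum_subtractf[symmetric]) (rule sum.cong, auto)
  finally show ?thesis .
qed

lemma L_sym: "transpose L = L"
  by (simp add: vec_eq_iff transpose_def laplacian_def degree_matrix_def adj_matrix_def symE)

lemma L_quad: "2 * (x \<bullet> (L *v x)) = (\<Sum>i\<in>UNIV. \<Sum>j\<in>UNIV. if E i j then (x$i - x$j)^2 else 0)"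
proof -
  define Q where "Q = (\<Sum>i\<in>UNIV. \<Sum>j\<in>UNIV. if E i j then x$i * (x$i - x$j) else 0)"
  have q1: "x \<bullet> (L *v x) = Q" unfolding Q_def inner_vec_def L_apply
    by (simp add: sum_distrib_left if_distrib if_distribR cong: if_cong)
  have "Q = (\<Sum>j\<in>UNIV. \<Sum>i\<in>UNIV. if E i j then x$i * (x$i - x$j) else 0)"
    unfolding Q_def by (rule sum.swap)
  also have "\<dots> = (\<Sum>i\<in>UNIV. \<Sum>j\<in>UNIV. if E i j then x$j * (x$j - x$i) else 0)"
    by (simp add: symE)
  finally have q2: "Q = \<dots>" .
  have "2 * Q = Q + Q" by simp
  also have "\<dots> = (\<Sum>i\<in>UNIV. \<Sum>j\<in>UNIV. (if E i j then x$i * (x$i - x$j) else 0) + (if E i j then x$j * (x$j - x$i) else 0))"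
    by (subst (2) q2) (simp add: Q_def sum.distrib)
  also have "\<dots> = (\<Sum>i\<in>UNIV. \<Sum>j\<in>UNIV. if E i j then (x$i - x$j)^2 else 0)"
    by (intro sum.cong refl) (simp add: power2_eq_square algebra_simps)
  finally show ?thesis using q1 by simp
qed

lemma L_psd: "0 \<le> x \<bullet> (L *v x)"
proof -
  have "0 \<le> (\<Sum>i\<in>UNIV. \<Sum>j\<in>UNIV. if E i j then (x$i - x$j)^2 else (0::real))"
    by (intro sum_nonneg) auto
  then show ?thesis using L_quad[of x] by simp
qed

lemma L_ker: assumes "x \<bullet> (L *v x) = 0" shows "x = (x $ k) *\<^sub>R one_vec"
proof -
  have s0: "(\<Sum>i\<in>UNIV. \<Sum>j\<in>UNIV. if E i j then (x$i - x$j)^2 else (0::real)) = 0"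
    using L_quad[of x] assms by simp
  have edge: "x$i = x$j" if "E i j" for i j
  proof -
    have "(\<Sum>j\<in>UNIV. if E i j then (x$i - x$j)^2 else (0::real)) = 0"
      using s0 by (subst (asm) sum_nonneg_eq_0_iff) (auto intro: sum_nonneg)
    then have "(if E i j then (x$i - x$j)^2 else (0::real)) = 0"
      by (subst (asm) sum_nonneg_eq_0_iff) auto
    then show ?thesis using that by simp
  qed
  have "\<forall>i. x$i = x$k"
  proof
    fix i
    have "(k, i) \<in> {(a, b). E a b}\<^sup>*" by (rule conn)
    then show "x$i = x$k"
      by (induction rule: rtrancl_induct) (auto dest: edge)
  qed
  then show ?thesis by (simp add: vec_eq_iff)
qed

lemma L_one: "L *v one_vec = 0"
  by (simp add: vec_eq_iff L_apply cong: if_cong)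

end



definition join :: "real^'n \<Rightarrow> real^'n \<Rightarrow> real^('n::finite + 'n)" where
  "join x v = (\<chi> a. case a of Inl i \<Rightarrow> x$i | Inr i \<Rightarrow> v$i)"
definition xp :: "real^('n::finite + 'n) \<Rightarrow> real^'n" where "xp z = (\<chi> i. z $ Inl i)"
definition vp :: "real^('n::finite + 'n) \<Rightarrow> real^'n" where "vp z = (\<chi> i. z $ Inr i)"
definition blk :: "real^'n^'n \<Rightarrow> real^'n^'n \<Rightarrow> real^'n^'n \<Rightarrow> real^'n^'n \<Rightarrow> real^('n::finite+'n)^('n+'n)" where
  "blk A B C D = (\<chi> a c. case a of
       Inl i \<Rightarrow> (case c of Inl j \<Rightarrow> A$i$j | Inr j \<Rightarrow> B$i$j)
     | Inr i \<Rightarrow> (case c of Inl j \<Rightarrow> C$i$j | Inr j \<Rightarrow> D$i$j))"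

lemma join_Inl[simp]: "join x v $ Inl i = x $ i" and join_Inr[simp]: "join x v $ Inr i = v $ i"
  by (simp_all add: join_def)

lemma xp_nth[simp]: "xp z $ i = z $ Inl i" and vp_nth[simp]: "vp z $ i = z $ Inr i"
  by (simp_all add: xp_def vp_def)

lemma join_eq_iff: "join x v = join x' v' \<longleftrightarrow> x = x' \<and> v = v'"
  by (auto simp: vec_eq_iff join_def split: sum.split)

lemma join_xp_vp: "join (xp z) (vp z) = z"
  by (simp add: vec_eq_iff join_def split: sum.split)

lemma join_add: "join x v + join x' v' = join (x + x') (v + v')"
  by (simp add: vec_eq_iff join_def split: sum.split)

lemma join_scale: "c *\<^sub>R join x v = join (c *\<^sub>R x) (c *\<^sub>R v)"
  by (simp add: vec_eq_iff join_def split: sum.split)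

lemma join_zero: "join 0 0 = 0"
  by (simp add: vec_eq_iff join_def split: sum.split)

lemma join_sum: "(\<Sum>b\<in>S. join (f b) (g b)) = join (\<Sum>b\<in>S. f b) (\<Sum>b\<in>S. g b)"
  by (simp add: vec_eq_iff join_def split: sum.split)

lemma sum_UNIV_plus: "(\<Sum>a\<in>(UNIV::('n::finite + 'n) set). f a) = (\<Sum>i\<in>UNIV. f (Inl i)) + (\<Sum>i\<in>UNIV. f (Inr i))"
  by (subst UNIV_Plus_UNIV[symmetric], subst sum.Plus) auto

lemma inner_join: "join x v \<bullet> join x' v' = x \<bullet> x' + v \<bullet> v'"
  by (simp add: inner_vec_def sum_UNIV_plus)

lemma blk_mv: "blk A B C D *v join x v = join (A *v x + B *v v) (C *v x + D *v v)"
proof (subst vec_eq_iff, intro allI)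
  fix a :: "'a + 'a"
  show "(blk A B C D *v join x v) $ a = join (A *v x + B *v v) (C *v x + D *v v) $ a"
    by (cases a) (simp_all add: blk_def matrix_vector_mult_def sum_UNIV_plus)
qed

lemma transpose_blk: "transpose (blk A B C D) = blk (transpose A) (transpose C) (transpose B) (transpose D)"
  by (simp add: vec_eq_iff blk_def transpose_def split: sum.split)

lemma block_G_blk: "block_G L = blk (mat 0) (mat 1) (- mat 1) (- L)"
  by (simp add: vec_eq_iff blk_def block_G_def mat_def split: sum.split)

lemma mv_sum: "M *v (\<Sum>b\<in>S. g b) = (\<Sum>b\<in>S. M *v g b)"
  by (induction S rule: infinite_finite_induct) (simp_all add: matrix_vector_right_distrib)

locale spec = graph E for E :: "'n::finite \<Rightarrow> 'n \<Rightarrow> bool" +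
  fixes B :: "(real^'n) set"
  assumes finB: "finite B" and unitB: "\<forall>b\<in>B. norm b = 1"
    and orthB: "\<forall>b\<in>B. \<forall>c\<in>B. b \<noteq> c \<longrightarrow> b \<bullet> c = 0"
    and eigB: "\<forall>b\<in>B. L *v b = (b \<bullet> (L *v b)) *\<^sub>R b"
    and expB: "\<And>x. x = (\<Sum>b\<in>B. (b \<bullet> x) *\<^sub>R b)"
begin

definition lam :: "real^'n \<Rightarrow> real" where "lam b = b \<bullet> (L *v b)"

lemma inner_B: "b \<in> B \<Longrightarrow> c \<in> B \<Longrightarrow> b \<bullet> c = (if b = c then 1 else 0)"
  using unitB orthB by (auto simp: dot_square_norm)

lemma L_b: "b \<in> B \<Longrightarrow> L *v b = lam b *\<^sub>R b"
  using eigB by (simp add: lam_def)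

lemma lam_nonneg: "0 \<le> lam b"
  unfolding lam_def by (rule L_psd)

lemma lam0_const: "lam b = 0 \<Longrightarrow> b = (b $ k) *\<^sub>R one_vec"
  unfolding lam_def by (rule L_ker)

lemma lam_pos_orth: assumes "b \<in> B" "lam b \<noteq> 0" shows "b \<bullet> one_vec = 0"
proof -
  have "(L *v b) \<bullet> one_vec = b \<bullet> (L *v one_vec)" using inner_mv_sym[OF L_sym] by simp
  then have "lam b * (b \<bullet> one_vec) = 0" using L_b[OF assms(1)] L_one by simp
  then show ?thesis using assms(2) by simp
qed

lemma sum_B_delta: "c \<in> B \<Longrightarrow> (\<Sum>b\<in>B. (f b * (b \<bullet> c)) *\<^sub>R b) = f c *\<^sub>R c"
proof -
  assume c: "c \<in> B"
  have "(\<Sum>b\<in>B. (f b * (b \<bullet> c)) *\<^sub>R b) = (\<Sum>b\<in>B. if b = c then f c *\<^sub>R c else 0)"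
    using c by (intro sum.cong refl) (simp add: inner_B)
  also have "\<dots> = f c *\<^sub>R c" using c finB by simp
  finally show ?thesis .
qed

lemma P0: "(\<Sum>b\<in>{b\<in>B. lam b = 0}. (b \<bullet> x) *\<^sub>R b) = ((\<Sum>i\<in>UNIV. x$i) / real CARD('n)) *\<^sub>R one_vec"
proof -
  obtain k :: 'n where True by blast
  define B0 where "B0 = {b\<in>B. lam b = 0}"
  define K where "K = (\<Sum>b\<in>B0. (b$k)^2)"
  have fin0: "finite B0" using finB by (simp add: B0_def)
  have gen: "(\<Sum>b\<in>B0. (b \<bullet> y) *\<^sub>R b) = (K * (\<Sum>i\<in>UNIV. y$i)) *\<^sub>R one_vec" for y
  proof -
    have "(\<Sum>b\<in>B0. (b \<bullet> y) *\<^sub>R b) = (\<Sum>b\<in>B0. ((b$k)^2 * (\<Sum>i\<in>UNIV. y$i)) *\<^sub>R one_vec)"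
    proof (intro sum.cong refl)
      fix b assume "b \<in> B0"
      then have eq: "b = (b $ k) *\<^sub>R one_vec" using lam0_const by (simp add: B0_def)
      have "b \<bullet> y = b$k * (\<Sum>i\<in>UNIV. y$i)" by (subst eq) (simp add: inner_vec_def sum_distrib_left)
      then show "(b \<bullet> y) *\<^sub>R b = ((b$k)^2 * (\<Sum>i\<in>UNIV. y$i)) *\<^sub>R one_vec"
        by (subst (2) eq) (simp add: power2_eq_square algebra_simps)
    qed
    also have "\<dots> = (K * (\<Sum>i\<in>UNIV. y$i)) *\<^sub>R one_vec"
      by (simp add: K_def scaleR_sum_left[symmetric] sum_distrib_right)
    finally show ?thesis .
  qed
  have "one_vec = (\<Sum>b\<in>B. (b \<bullet> one_vec) *\<^sub>R b)" by (rule expB)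
  also have "\<dots> = (\<Sum>b\<in>B0. (b \<bullet> one_vec) *\<^sub>R b)"
    using finB lam_pos_orth by (intro sum.mono_neutral_right) (auto simp: B0_def)
  also have "\<dots> = (K * real CARD('n)) *\<^sub>R one_vec" by (simp add: gen)
  finally have "(one_vec::real^'n) $ k = ((K * real CARD('n)) *\<^sub>R one_vec) $ k" by simp
  then have KN: "K * real CARD('n) = 1" by simp
  have "(\<Sum>b\<in>B0. (b \<bullet> x) *\<^sub>R b) = (K * (\<Sum>i\<in>UNIV. x$i)) *\<^sub>R one_vec" by (rule gen)
  also have "K = 1 / real CARD('n)" using KN by (simp add: field_simps)
  finally show ?thesis unfolding B0_def by simp
qed

definition fmat :: "(real \<Rightarrow> real) \<Rightarrow> real^'n^'n" where
  "fmat f = (\<Sum>b\<in>B. f (lam b) *\<^sub>R (\<chi> i j. b$i * b$j))"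

lemma fmat_mv: "fmat f *v x = (\<Sum>b\<in>B. (f (lam b) * (b \<bullet> x)) *\<^sub>R b)"
  by (simp add: fmat_def vec_eq_iff matrix_vector_mult_def inner_vec_def sum_distrib_left
      algebra_simps sum_component) (subst sum.swap, simp add: sum_distrib_left mult_ac)

lemma fmat_b: "c \<in> B \<Longrightarrow> fmat f *v c = f (lam c) *\<^sub>R c"
  by (simp add: fmat_mv sum_B_delta)

lemma fmat_sym: "transpose (fmat f) = fmat f"
  by (simp add: fmat_def vec_eq_iff transpose_def sum_component mult.commute)

definition pr :: "real^'n \<Rightarrow> real \<Rightarrow> real \<Rightarrow> real^('n+'n)" where
  "pr b \<alpha> \<beta> = join (\<alpha> *\<^sub>R b) (\<beta> *\<^sub>R b)"

lemma decomp: "z = (\<Sum>b\<in>B. pr b (b \<bullet> xp z) (b \<bullet> vp z))"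
  unfolding pr_def join_sum using expB[of "xp z"] expB[of "vp z"] join_xp_vp[of z] by simp

lemma mat_eq_pr:
  assumes "\<And>b \<alpha> \<beta>. b \<in> B \<Longrightarrow> M *v pr b \<alpha> \<beta> = N *v pr b \<alpha> \<beta>"
  shows "M = N"
proof (subst matrix_eq, intro allI)
  fix z
  show "M *v z = N *v z" using assms
    by (subst (1 2) decomp[of z]) (simp add: mv_sum)
qed

lemma blk_pr:
  assumes "A *v b = a *\<^sub>R b" "B' *v b = b' *\<^sub>R b" "C *v b = c *\<^sub>R b" "D *v b = d *\<^sub>R b"
  shows "blk A B' C D *v pr b \<alpha> \<beta> = pr b (a * \<alpha> + b' * \<beta>) (c * \<alpha> + d * \<beta>)"
  unfolding pr_def blk_mv using assms by (simp add: matrix_vector_mult_scaleR algebra_simps)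

lemma inner_pr: "b \<in> B \<Longrightarrow> c \<in> B \<Longrightarrow> pr b \<alpha> \<beta> \<bullet> pr c \<alpha>' \<beta>' = (if b = c then \<alpha> * \<alpha>' + \<beta> * \<beta>' else 0)"
  by (simp add: pr_def inner_join inner_B)

end



definition tr :: "real^'n::finite^'n \<Rightarrow> real" where "tr X = (\<Sum>i\<in>UNIV. X$i$i)"

lemma tr_comm: "tr (X ** Y) = tr (Y ** X)"
  unfolding tr_def matrix_matrix_mult_def
  by simp (subst sum.swap, simp add: mult.commute)

lemma tr_add: "tr (X + Y) = tr X + tr Y"
  by (simp add: tr_def sum.distrib)

lemma neg_mv: "(- M) *v x = - (M *v (x::real^'n::finite))"
  by (simp add: vec_eq_iff matrix_vector_mult_def sum_negf)

lemma transpose_neg: "transpose (- M) = - transpose (M::real^'n::finite^'m::finite)"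
  by (simp add: vec_eq_iff transpose_def)

lemma pos_def_nonneg: "pos_def_matrix P \<Longrightarrow> 0 \<le> x \<bullet> (P *v x)"
  unfolding pos_def_matrix_def by (cases "x = 0") (auto intro: less_imp_le)

lemma tr_quad:
  fixes D P :: "real^'n::finite^'n"
  assumes "transpose D = D"
  shows "tr (D ** (P ** D)) = (\<Sum>j\<in>UNIV. (\<chi> i. D$i$j) \<bullet> (P *v (\<chi> i. D$i$j)))"
proof -
  have sym: "D$j$i = D$i$j" for i j using assms by (metis transpose_def vec_lambda_beta)
  show ?thesis unfolding tr_def
    by (simp add: matrix_matrix_mult_def matrix_vector_mult_def inner_vec_def sym)
qed

lemma sqrt_unique:
  fixes P Q :: "real^'n::finite^'n"
  assumes P: "pos_def_matrix P" and Q: "pos_def_matrix Q" and PQ: "P ** P = Q ** Q"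
  shows "P = Q"
proof -
  define D where "D = P - Q"
  have symD: "transpose D = D" using P Q
    by (simp add: D_def pos_def_matrix_def vec_eq_iff transpose_def)
  have "P ** D + D ** Q = 0"
  proof (subst matrix_eq, intro allI)
    fix x
    have "(P ** D + D ** Q) *v x = P *v (P *v x) - Q *v (Q *v x)"
      by (simp add: D_def matrix_vector_mult_add_rdistrib matrix_vector_mul_assoc[symmetric]
          matrix_vector_mult_diff_rdistrib matrix_vector_mult_diff_distrib)
    also have "\<dots> = 0" using PQ by (simp add: matrix_vector_mul_assoc)
    finally show "(P ** D + D ** Q) *v x = 0 *v x" by simp
  qed
  then have "tr (D ** (P ** D + D ** Q)) = 0" by (simp add: tr_def matrix_matrix_mult_def)
  then have "tr (D ** (P ** D)) + tr ((D ** D) ** Q) = 0"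
    by (simp add: matrix_add_ldistrib tr_add matrix_mul_assoc)
  moreover have "tr ((D ** D) ** Q) = tr (D ** (Q ** D))"
  proof -
    have "tr ((D ** D) ** Q) = tr (Q ** (D ** D))" by (rule tr_comm)
    also have "\<dots> = tr ((Q ** D) ** D)" by (simp add: matrix_mul_assoc)
    also have "\<dots> = tr (D ** (Q ** D))" by (rule tr_comm)
    finally show ?thesis .
  qed
  ultimately have s0: "tr (D ** (P ** D)) + tr (D ** (Q ** D)) = 0" by simp
  define c where "c j = (\<chi> i. D$i$j)" for j
  have nP: "0 \<le> c j \<bullet> (P *v c j)" and nQ: "0 \<le> c j \<bullet> (Q *v c j)" for j
    using pos_def_nonneg P Q by auto
  have "tr (D ** (P ** D)) = (\<Sum>j\<in>UNIV. c j \<bullet> (P *v c j))"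
    unfolding c_def by (rule tr_quad[OF symD])
  moreover have "tr (D ** (Q ** D)) = (\<Sum>j\<in>UNIV. c j \<bullet> (Q *v c j))"
    unfolding c_def by (rule tr_quad[OF symD])
  ultimately have "(\<Sum>j\<in>UNIV. c j \<bullet> (P *v c j)) = 0" using s0 nP nQ
    by (smt (verit, best) sum_nonneg)
  then have "c j \<bullet> (P *v c j) = 0" for j using nP
    by (subst (asm) sum_nonneg_eq_0_iff) auto
  then have "c j = 0" for j using P unfolding pos_def_matrix_def by (metis less_irrefl)
  then have "D = 0" by (simp add: c_def vec_eq_iff)
  then show ?thesis by (simp add: D_def)
qed

lemma mat_sqrt_eq: "pos_def_matrix P \<Longrightarrow> P ** P = M \<Longrightarrow> mat_sqrt M = P"
  unfolding mat_sqrt_def by (rule the_equality) (auto intro: sqrt_unique)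

lemma matrix_inv_eq:
  fixes A A' :: "real^'n::finite^'n"
  assumes "A ** A' = mat 1" "A' ** A = mat 1"
  shows "matrix_inv A = A'"
proof -
  have ex: "\<exists>X. A ** X = mat 1 \<and> X ** A = mat 1" using assms by blast
  define X where "X = matrix_inv A"
  have X: "A ** X = mat 1 \<and> X ** A = mat 1"
    unfolding X_def matrix_inv_def by (rule someI_ex[OF ex])
  have "X = X ** (A ** A')" using assms by simp
  also have "\<dots> = (X ** A) ** A'" by (simp add: matrix_mul_assoc)
  also have "\<dots> = A'" using X by simp
  finally show ?thesis by (simp add: X_def)
qed



context spec begin

definition sq :: "real \<Rightarrow> real" where "sq l = sqrt (l^2 + 4)"

lemma l24: "(l::real)^2 + 4 > 0" using zero_le_power2[of l] by linarith

lemma sq_pos: "sq l > 0" using l24[of l] by (simp add: sq_def)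

lemma sq_inv: "inverse (sq l) * inverse (sq l) * (l^2 + 4) = 1"
proof -
  have "sq l * sq l = l^2 + 4" unfolding sq_def
    using l24[of l] by simp
  then show ?thesis using sq_pos[of l] l24[of l] by (simp add: field_simps)
qed

abbreviation "G \<equiv> block_G L"

definition Pm :: "real^('n+'n)^('n+'n)" where
  "Pm = blk (fmat (\<lambda>l. 2 / sq l)) (fmat (\<lambda>l. l / sq l)) (fmat (\<lambda>l. l / sq l)) (fmat (\<lambda>l. (2 + l^2) / sq l))"
definition Pinv :: "real^('n+'n)^('n+'n)" where
  "Pinv = blk (fmat (\<lambda>l. (2 + l^2) / sq l)) (fmat (\<lambda>l. - l / sq l)) (fmat (\<lambda>l. - l / sq l)) (fmat (\<lambda>l. 2 / sq l))"
definition Um :: "real^('n+'n)^('n+'n)" where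
  "Um = blk (fmat (\<lambda>l. - l / sq l)) (fmat (\<lambda>l. 2 / sq l)) (fmat (\<lambda>l. - 2 / sq l)) (fmat (\<lambda>l. - l / sq l))"

lemma G_pr: "b \<in> B \<Longrightarrow> G *v pr b \<alpha> \<beta> = pr b \<beta> (- \<alpha> - lam b * \<beta>)"
  unfolding block_G_blk
  by (subst blk_pr[where a=0 and b'=1 and c="-1" and d="- lam b"]) (simp_all add: neg_mv L_b)

lemma Gt_pr: "b \<in> B \<Longrightarrow> transpose G *v pr b \<alpha> \<beta> = pr b (- \<beta>) (\<alpha> - lam b * \<beta>)"
  unfolding block_G_blk transpose_blk transpose_neg L_sym transpose_mat
  by (subst blk_pr[where a=0 and b'="-1" and c="1" and d="- lam b"]) (simp_all add: neg_mv L_b)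

lemma Pm_pr: "b \<in> B \<Longrightarrow> Pm *v pr b \<alpha> \<beta> =
   pr b (2 / sq (lam b) * \<alpha> + lam b / sq (lam b) * \<beta>) (lam b / sq (lam b) * \<alpha> + (2 + (lam b)^2) / sq (lam b) * \<beta>)"
  unfolding Pm_def by (rule blk_pr) (simp_all add: fmat_b)

lemma Pinv_pr: "b \<in> B \<Longrightarrow> Pinv *v pr b \<alpha> \<beta> =
   pr b ((2 + (lam b)^2) / sq (lam b) * \<alpha> + - lam b / sq (lam b) * \<beta>) (- lam b / sq (lam b) * \<alpha> + 2 / sq (lam b) * \<beta>)"
  unfolding Pinv_def by (rule blk_pr) (simp_all add: fmat_b)

lemma Um_pr: "b \<in> B \<Longrightarrow> Um *v pr b \<alpha> \<beta> =
   pr b (- lam b / sq (lam b) * \<alpha> + 2 / sq (lam b) * \<beta>) (- 2 / sq (lam b) * \<alpha> + - lam b / sq (lam b) * \<beta>)"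
  unfolding Um_def by (rule blk_pr) (simp_all add: fmat_b)

lemma PP: "Pm ** Pm = transpose G ** G"
proof (rule mat_eq_pr)
  fix b \<alpha> \<beta> assume b: "b \<in> B"
  define l where "l = lam b"
  define a where "a = inverse (sq l)"
  have h: "a * a * (l^2 + 4) = 1" unfolding a_def by (rule sq_inv)
  have e1: "2 / sq l * (2 / sq l * \<alpha> + l / sq l * \<beta>) + l / sq l * (l / sq l * \<alpha> + (2 + l^2) / sq l * \<beta>) = - (- \<alpha> - l * \<beta>)"
  proof -
    have eq: "2 / sq l * (2 / sq l * \<alpha> + l / sq l * \<beta>) + l / sq l * (l / sq l * \<alpha> + (2 + l^2) / sq l * \<beta>) = (a * a * (l^2 + 4)) * (\<alpha> + l * \<beta>)"
      by (simp add: a_def divide_inverse algebra_simps power2_eq_square)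
    show ?thesis by (simp only: eq h) simp
  qed
  have e2: "l / sq l * (2 / sq l * \<alpha> + l / sq l * \<beta>) + (2 + l^2) / sq l * (l / sq l * \<alpha> + (2 + l^2) / sq l * \<beta>) = \<beta> - l * (- \<alpha> - l * \<beta>)"
  proof -
    have eq: "l / sq l * (2 / sq l * \<alpha> + l / sq l * \<beta>) + (2 + l^2) / sq l * (l / sq l * \<alpha> + (2 + l^2) / sq l * \<beta>) = (a * a * (l^2 + 4)) * (l * \<alpha> + (1 + l^2) * \<beta>)"
      by (simp add: a_def divide_inverse algebra_simps power2_eq_square)
    show ?thesis by (simp only: eq h) (simp add: algebra_simps power2_eq_square)
  qed
  show "(Pm ** Pm) *v pr b \<alpha> \<beta> = (transpose G ** G) *v pr b \<alpha> \<beta>"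
    by (simp only: matrix_vector_mul_assoc[symmetric] G_pr[OF b] Gt_pr[OF b] Pm_pr[OF b]
        l_def[symmetric] e1 e2)
qed

lemma Pm_sym: "transpose Pm = Pm"
  unfolding Pm_def transpose_blk fmat_sym ..

lemma pr_zero: "pr b 0 0 = 0"
  by (simp add: pr_def join_zero)

lemma Pm_posdef: "pos_def_matrix Pm"
  unfolding pos_def_matrix_def
proof (intro conjI allI impI Pm_sym)
  fix z :: "real^('n+'n)" assume z: "z \<noteq> 0"
  define \<alpha> where "\<alpha> b = b \<bullet> xp z" for b
  define \<beta> where "\<beta> b = b \<bullet> vp z" for b
  define q where "q b = \<alpha> b * (2 / sq (lam b) * \<alpha> b + lam b / sq (lam b) * \<beta> b)
     + \<beta> b * (lam b / sq (lam b) * \<alpha> b + (2 + (lam b)^2) / sq (lam b) * \<beta> b)" for b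
  have zd: "z = (\<Sum>b\<in>B. pr b (\<alpha> b) (\<beta> b))" unfolding \<alpha>_def \<beta>_def by (rule decomp)
  have "z \<bullet> (Pm *v z) = (\<Sum>b\<in>B. \<Sum>c\<in>B. pr b (\<alpha> b) (\<beta> b) \<bullet>
      pr c (2 / sq (lam c) * \<alpha> c + lam c / sq (lam c) * \<beta> c) (lam c / sq (lam c) * \<alpha> c + (2 + (lam c)^2) / sq (lam c) * \<beta> c))"
    by (subst (1 2) zd) (simp add: mv_sum Pm_pr inner_sum_left inner_sum_right, subst sum.swap, rule refl)
  also have "\<dots> = (\<Sum>b\<in>B. q b)"
  proof (rule sum.cong[OF refl])
    fix b assume b: "b \<in> B"
    have "(\<Sum>c\<in>B. pr b (\<alpha> b) (\<beta> b) \<bullet>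
      pr c (2 / sq (lam c) * \<alpha> c + lam c / sq (lam c) * \<beta> c) (lam c / sq (lam c) * \<alpha> c + (2 + (lam c)^2) / sq (lam c) * \<beta> c))
      = (\<Sum>c\<in>B. if b = c then q b else 0)"
      using b by (intro sum.cong refl) (simp add: inner_pr q_def)
    also have "\<dots> = q b" using b finB by simp
    finally show "(\<Sum>c\<in>B. pr b (\<alpha> b) (\<beta> b) \<bullet>
      pr c (2 / sq (lam c) * \<alpha> c + lam c / sq (lam c) * \<beta> c) (lam c / sq (lam c) * \<alpha> c + (2 + (lam c)^2) / sq (lam c) * \<beta> c))
      = q b" .
  qed
  finally have zq: "z \<bullet> (Pm *v z) = (\<Sum>b\<in>B. q b)" .
  have qform: "q b = ((\<alpha> b + lam b * \<beta> b)^2 + (\<alpha> b)^2 + 2 * (\<beta> b)^2) / sq (lam b)" for b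
    using sq_pos[of "lam b"] unfolding q_def by (simp add: field_simps power2_eq_square)
  have qnn: "0 \<le> q b" for b unfolding qform using sq_pos[of "lam b"] by simp
  obtain b where b: "b \<in> B" "\<alpha> b \<noteq> 0 \<or> \<beta> b \<noteq> 0"
  proof (rule ccontr)
    assume "\<not> thesis"
    with that have "\<forall>b\<in>B. \<alpha> b = 0 \<and> \<beta> b = 0" by blast
    then have "z = 0" by (subst zd) (simp add: pr_zero)
    with z show False by simp
  qed
  have pos: "0 < (\<alpha> b)^2 + 2 * (\<beta> b)^2"
  proof (cases "\<alpha> b = 0")
    case True
    then have "\<beta> b \<noteq> 0" using b(2) by simp
    then show ?thesis by (simp add: True)
  next
    case False
    then show ?thesis by (simp add: add_pos_nonneg)
  qed
  have "0 < (\<alpha> b + lam b * \<beta> b)^2 + (\<alpha> b)^2 + 2 * (\<beta> b)^2"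
    using pos zero_le_power2[of "\<alpha> b + lam b * \<beta> b"] by linarith
  then have "0 < q b" unfolding qform using sq_pos[of "lam b"] by (rule divide_pos_pos)
  then show "0 < z \<bullet> (Pm *v z)" unfolding zq using finB b(1) qnn by (intro sum_pos2) auto
qed

lemma Pm_Pinv: "Pm ** Pinv = mat 1"
proof (rule mat_eq_pr)
  fix b \<alpha> \<beta> assume b: "b \<in> B"
  define l where "l = lam b"
  define a where "a = inverse (sq l)"
  have h: "a * a * (l^2 + 4) = 1" unfolding a_def by (rule sq_inv)
  have e1: "2 / sq l * ((2 + l^2) / sq l * \<alpha> + - l / sq l * \<beta>) + l / sq l * (- l / sq l * \<alpha> + 2 / sq l * \<beta>) = \<alpha>"
  proof -
    have eq: "2 / sq l * ((2 + l^2) / sq l * \<alpha> + - l / sq l * \<beta>) + l / sq l * (- l / sq l * \<alpha> + 2 / sq l * \<beta>) = (a * a * (l^2 + 4)) * \<alpha>"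
      by (simp add: a_def divide_inverse algebra_simps power2_eq_square)
    show ?thesis by (simp only: eq h mult_1)
  qed
  have e2: "l / sq l * ((2 + l^2) / sq l * \<alpha> + - l / sq l * \<beta>) + (2 + l^2) / sq l * (- l / sq l * \<alpha> + 2 / sq l * \<beta>) = \<beta>"
  proof -
    have eq: "l / sq l * ((2 + l^2) / sq l * \<alpha> + - l / sq l * \<beta>) + (2 + l^2) / sq l * (- l / sq l * \<alpha> + 2 / sq l * \<beta>) = (a * a * (l^2 + 4)) * \<beta>"
      by (simp add: a_def divide_inverse algebra_simps power2_eq_square)
    show ?thesis by (simp only: eq h mult_1)
  qed
  show "(Pm ** Pinv) *v pr b \<alpha> \<beta> = mat 1 *v pr b \<alpha> \<beta>"
    by (simp only: matrix_vector_mul_assoc[symmetric] Pinv_pr[OF b] Pm_pr[OF b]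
        l_def[symmetric] e1 e2 matrix_vector_mul_lid)
qed

lemma Pinv_Pm: "Pinv ** Pm = mat 1"
proof (rule mat_eq_pr)
  fix b \<alpha> \<beta> assume b: "b \<in> B"
  define l where "l = lam b"
  define a where "a = inverse (sq l)"
  have h: "a * a * (l^2 + 4) = 1" unfolding a_def by (rule sq_inv)
  have e1: "(2 + l^2) / sq l * (2 / sq l * \<alpha> + l / sq l * \<beta>) + - l / sq l * (l / sq l * \<alpha> + (2 + l^2) / sq l * \<beta>) = \<alpha>"
  proof -
    have eq: "(2 + l^2) / sq l * (2 / sq l * \<alpha> + l / sq l * \<beta>) + - l / sq l * (l / sq l * \<alpha> + (2 + l^2) / sq l * \<beta>) = (a * a * (l^2 + 4)) * \<alpha>"
      by (simp add: a_def divide_inverse algebra_simps power2_eq_square)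
    show ?thesis by (simp only: eq h mult_1)
  qed
  have e2: "- l / sq l * (2 / sq l * \<alpha> + l / sq l * \<beta>) + 2 / sq l * (l / sq l * \<alpha> + (2 + l^2) / sq l * \<beta>) = \<beta>"
  proof -
    have eq: "- l / sq l * (2 / sq l * \<alpha> + l / sq l * \<beta>) + 2 / sq l * (l / sq l * \<alpha> + (2 + l^2) / sq l * \<beta>) = (a * a * (l^2 + 4)) * \<beta>"
      by (simp add: a_def divide_inverse algebra_simps power2_eq_square)
    show ?thesis by (simp only: eq h mult_1)
  qed
  show "(Pinv ** Pm) *v pr b \<alpha> \<beta> = mat 1 *v pr b \<alpha> \<beta>"
    by (simp only: matrix_vector_mul_assoc[symmetric] Pinv_pr[OF b] Pm_pr[OF b]
        l_def[symmetric] e1 e2 matrix_vector_mul_lid)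
qed

lemma G_Pinv: "G ** Pinv = Um"
proof (rule mat_eq_pr)
  fix b \<alpha> \<beta> assume b: "b \<in> B"
  define l where "l = lam b"
  have e2: "- ((2 + l^2) / sq l * \<alpha> + - l / sq l * \<beta>) - l * (- l / sq l * \<alpha> + 2 / sq l * \<beta>)
      = - 2 / sq l * \<alpha> + - l / sq l * \<beta>"
    by (simp add: divide_inverse algebra_simps power2_eq_square)
  show "(G ** Pinv) *v pr b \<alpha> \<beta> = Um *v pr b \<alpha> \<beta>"
    by (simp only: matrix_vector_mul_assoc[symmetric] Pinv_pr[OF b] G_pr[OF b] Um_pr[OF b]
        l_def[symmetric] e2)
qed

lemma polar_U_eq: "polar_U G = Um"
proof -
  have "mat_sqrt (transpose G ** G) = Pm" by (rule mat_sqrt_eq[OF Pm_posdef PP])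
  then show ?thesis unfolding polar_U_def
    by (simp add: matrix_inv_eq[OF Pm_Pinv Pinv_Pm] G_Pinv)
qed

end


fun rec2 :: "real \<Rightarrow> real \<Rightarrow> real \<Rightarrow> nat \<Rightarrow> real" where
  "rec2 l a c 0 = a"
| "rec2 l a c (Suc 0) = c"
| "rec2 l a c (Suc (Suc k)) = - rec2 l a c k - l * rec2 l a c (Suc k)"

lemma rec2_shift: "rec2 l a c (Suc k) = rec2 l c (- a - l * c) k"
  by (induction l a c k rule: rec2.induct) simp_all
lemma exp_lim_neg: "(c::real) < 0 \<Longrightarrow> ((\<lambda>t. exp (t * c)) \<longlongrightarrow> 0) at_top"
proof -
  assume c: "c < 0"
  have "filterlim (\<lambda>t. c * t) at_bot at_top"
    by (rule filterlim_tendsto_neg_mult_at_bot[OF tendsto_const c filterlim_ident])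
  then have "filterlim (\<lambda>t. t * c) at_bot at_top" by (simp add: mult.commute)
  from filterlim_compose[OF exp_at_bot this] show ?thesis .
qed

lemma cexp_lim: "Re \<mu> < 0 \<Longrightarrow> ((\<lambda>t. exp (complex_of_real t * \<mu>)) \<longlongrightarrow> 0) at_top"
  by (subst tendsto_norm_zero_iff[symmetric]) (simp add: exp_lim_neg)

lemma cexp_sums: "(\<lambda>k. complex_of_real (t^k / fact k) * \<mu>^k) sums exp (complex_of_real t * \<mu>)"
proof -
  have "(\<lambda>k. (complex_of_real t * \<mu>)^k /\<^sub>R fact k) sums exp (complex_of_real t * \<mu>)"
    by (rule exp_converges)
  moreover have "(complex_of_real t * \<mu>)^k /\<^sub>R fact k = complex_of_real (t^k / fact k) * \<mu>^k" for k
    by (simp add: scaleR_conv_of_real power_mult_distrib divide_inverse mult_ac)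
  ultimately show ?thesis by simp
qed

lemma root_re_neg:
  assumes "\<mu>^2 + complex_of_real l * \<mu> + 1 = 0" "l > 0"
  shows "Re \<mu> < 0"
proof -
  have r: "(Re \<mu>)^2 - (Im \<mu>)^2 + l * Re \<mu> + 1 = 0"
    using arg_cong[OF assms(1), of Re] by (simp add: power2_eq_square)
  have i: "2 * Re \<mu> * Im \<mu> + l * Im \<mu> = 0"
    using arg_cong[OF assms(1), of Im] by (simp add: power2_eq_square mult_ac)
  show ?thesis
  proof (cases "Im \<mu> = 0")
    case True
    with r have "Re \<mu> * (Re \<mu> + l) = -1" by (simp add: power2_eq_square algebra_simps)
    then show ?thesis using assms(2)
      by (smt (verit) mult_nonneg_nonneg)
  next
    case False
    with i have "2 * Re \<mu> + l = 0"
      by (metis distrib_right mult_eq_0_iff)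
    then show ?thesis using assms(2) by simp
  qed
qed

lemma rec_exp:
  assumes l: "l > 0"
  shows "\<exists>F. (\<forall>t. (\<lambda>k. (t^k / fact k) * rec2 l a c k) sums F t) \<and> (F \<longlongrightarrow> 0) at_top"
proof (cases "l = 2")
  case True
  have cf: "rec2 2 a c k = (-1)^k * (a - real k * (a + c))" for k
  proof (induction "2::real" a c k rule: rec2.induct)
    case (3 a c k)
    have "rec2 2 a c (Suc (Suc k)) = - ((-1)^k * (a - real k * (a + c))) - 2 * ((-1)^Suc k * (a - real (Suc k) * (a + c)))"
      using 3 by simp
    also have "\<dots> = (-1)^Suc (Suc k) * (a - real (Suc (Suc k)) * (a + c))"
      by (simp only: power_Suc of_nat_Suc) algebra
    finally show ?case .
  qed simp_all
  have S1: "(\<lambda>k. t^k / fact k * (-1)^k) sums exp (-t)" for t :: real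
  proof -
    have "(\<lambda>k. (-t)^k /\<^sub>R fact k) sums exp (-t)" by (rule exp_converges)
    moreover have "(-t)^k /\<^sub>R fact k = t^k / fact k * (-1)^k" for k
      by (subst power_minus) (simp add: divide_inverse mult_ac)
    ultimately show ?thesis by simp
  qed
  have S2: "(\<lambda>k. t^k / fact k * (-1)^k * real k) sums (- t * exp (-t))" for t :: real
  proof -
    define f where "f k = t^k / fact k * (-1)^k * real k" for k
    have "f (Suc k) = - t * (t^k / fact k * (-1)^k)" for k
    proof -
      have hpos: "fact k + fact k * real k > (0::real)"
        by (intro add_pos_nonneg mult_nonneg_nonneg) auto
      show ?thesis
        unfolding f_def using hpos by (simp only: fact_Suc power_Suc of_nat_mult) (simp add: field_simps)
    qed
    then have "(\<lambda>k. f (Suc k)) sums (- t * exp (-t))" using sums_mult[OF S1[of t], of "-t"] by simp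
    then have "f sums (- t * exp (-t) + f 0)" by (simp add: sums_Suc_iff)
    then show ?thesis unfolding f_def by simp
  qed
  define F where "F t = a * exp (-t) - (a + c) * (- t * exp (-t))" for t :: real
  show ?thesis
  proof (intro exI conjI allI)
    fix t :: real
    have "(\<lambda>k. a * (t^k / fact k * (-1)^k) - (a + c) * (t^k / fact k * (-1)^k * real k)) sums F t"
      unfolding F_def by (intro sums_diff sums_mult S1 S2)
    moreover have "a * (t^k / fact k * (-1)^k) - (a + c) * (t^k / fact k * (-1)^k * real k)
        = (t^k / fact k) * rec2 l a c k" for k
      unfolding True cf by algebra
    ultimately show "(\<lambda>k. (t^k / fact k) * rec2 l a c k) sums F t" by simp
  next
    have e1: "((\<lambda>t::real. exp (-t)) \<longlongrightarrow> 0) at_top"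
      using exp_lim_neg[of "-1"] by simp
    have e2: "((\<lambda>t::real. t * exp (-t)) \<longlongrightarrow> 0) at_top"
      using tendsto_power_div_exp_0[of 1] by (simp add: exp_minus divide_inverse)
    have "((\<lambda>t. a * exp (-t) + (a + c) * (t * exp (-t))) \<longlongrightarrow> a * 0 + (a + c) * 0) at_top"
      by (intro tendsto_intros e1 e2)
    then show "(F \<longlongrightarrow> 0) at_top" unfolding F_def by simp
  qed
next
  case False
  define d where "d = csqrt (complex_of_real (l^2 - 4))"
  have dd: "d^2 = complex_of_real (l^2 - 4)" unfolding d_def by simp
  have d0: "d \<noteq> 0"
  proof
    assume "d = 0"
    then have "complex_of_real (l^2 - 4) = 0" using dd by (metis power_zero_numeral)
    then have "l^2 - 4 = 0" by (simp only: of_real_eq_0_iff)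
    then have "(l - 2) * (l + 2) = 0" by (simp add: power2_eq_square algebra_simps)
    then show False using False l by simp
  qed
  define m1 where "m1 = (- complex_of_real l + d) / 2"
  define m2 where "m2 = (- complex_of_real l - d) / 2"
  have root1: "m1^2 + complex_of_real l * m1 + 1 = 0"
  proof -
    have "m1^2 + complex_of_real l * m1 + 1 = (d^2 - complex_of_real (l^2 - 4)) / 4"
      unfolding m1_def by (simp add: field_simps power2_eq_square)
    then show ?thesis using dd by simp
  qed
  have root2: "m2^2 + complex_of_real l * m2 + 1 = 0"
  proof -
    have "m2^2 + complex_of_real l * m2 + 1 = (d^2 - complex_of_real (l^2 - 4)) / 4"
      unfolding m2_def by (simp add: field_simps power2_eq_square)
    then show ?thesis using dd by simp
  qed
  have md: "m1 - m2 = d" unfolding m1_def m2_def by (simp add: field_simps)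
  define A where "A = (complex_of_real c - m2 * complex_of_real a) / d"
  define B' where "B' = (m1 * complex_of_real a - complex_of_real c) / d"
  have p1: "m1^(Suc (Suc k)) = - (m1^k) - complex_of_real l * m1^(Suc k)" for k
  proof -
    have "m1^2 = - complex_of_real l * m1 - 1" using root1 by (simp add: algebra_simps eq_neg_iff_add_eq_0)
    have "m1^(Suc (Suc k)) = m1^k * m1^2" by (simp add: power2_eq_square mult_ac)
    also have "\<dots> = m1^k * (- complex_of_real l * m1 - 1)" by (simp add: \<open>m1^2 = _\<close>)
    also have "\<dots> = - (m1^k) - complex_of_real l * m1^(Suc k)" by (simp add: algebra_simps)
    finally show ?thesis .
  qed
  have p2: "m2^(Suc (Suc k)) = - (m2^k) - complex_of_real l * m2^(Suc k)" for k
  proof -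
    have "m2^2 = - complex_of_real l * m2 - 1" using root2 by (simp add: algebra_simps eq_neg_iff_add_eq_0)
    have "m2^(Suc (Suc k)) = m2^k * m2^2" by (simp add: power2_eq_square mult_ac)
    also have "\<dots> = m2^k * (- complex_of_real l * m2 - 1)" by (simp add: \<open>m2^2 = _\<close>)
    also have "\<dots> = - (m2^k) - complex_of_real l * m2^(Suc k)" by (simp add: algebra_simps)
    finally show ?thesis .
  qed
  have b0: "A + B' = complex_of_real a"
  proof -
    have "A + B' = ((complex_of_real c - m2 * complex_of_real a) + (m1 * complex_of_real a - complex_of_real c)) / d"
      unfolding A_def B'_def using d0 by (simp add: field_simps)
    also have "(complex_of_real c - m2 * complex_of_real a) + (m1 * complex_of_real a - complex_of_real c) = d * complex_of_real a"
      using md by (simp add: algebra_simps)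
    finally show ?thesis using d0 by simp
  qed
  have b1: "A * m1 + B' * m2 = complex_of_real c"
  proof -
    have "A * m1 + B' * m2 = ((complex_of_real c - m2 * complex_of_real a) * m1 + (m1 * complex_of_real a - complex_of_real c) * m2) / d"
      unfolding A_def B'_def using d0 by (simp add: field_simps)
    also have "(complex_of_real c - m2 * complex_of_real a) * m1 + (m1 * complex_of_real a - complex_of_real c) * m2 = d * complex_of_real c"
      using md by (simp add: algebra_simps)
    finally show ?thesis using d0 by simp
  qed
  have cf2: "complex_of_real (rec2 l a c k) = A * m1^k + B' * m2^k \<and>
      complex_of_real (rec2 l a c (Suc k)) = A * m1^(Suc k) + B' * m2^(Suc k)" for k
  proof (induction k)
    case 0 then show ?case using b0 b1 by simp
  next
    case (Suc k)
    have "complex_of_real (rec2 l a c (Suc (Suc k))) = - complex_of_real (rec2 l a c k) - complex_of_real l * complex_of_real (rec2 l a c (Suc k))"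
      by simp
    also have "\<dots> = - (A * m1^k + B' * m2^k) - complex_of_real l * (A * m1^(Suc k) + B' * m2^(Suc k))"
      using Suc.IH by (simp only:)
    also have "\<dots> = A * m1^(Suc (Suc k)) + B' * m2^(Suc (Suc k))"
      by (simp only: p1 p2) (simp add: algebra_simps)
    finally show ?case using Suc.IH by blast
  qed
  define Z where "Z t = A * exp (complex_of_real t * m1) + B' * exp (complex_of_real t * m2)" for t
  show ?thesis
  proof (intro exI conjI allI)
    fix t :: real
    have "(\<lambda>k. A * (complex_of_real (t^k / fact k) * m1^k) + B' * (complex_of_real (t^k / fact k) * m2^k)) sums Z t"
      unfolding Z_def by (intro sums_add sums_mult cexp_sums)
    moreover have "A * (complex_of_real (t^k / fact k) * m1^k) + B' * (complex_of_real (t^k / fact k) * m2^k)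
        = complex_of_real (t^k / fact k * rec2 l a c k)" for k
      using cf2[of k] by (simp add: algebra_simps add_divide_distrib)
    ultimately have "(\<lambda>k. complex_of_real (t^k / fact k * rec2 l a c k)) sums Z t" by simp
    from sums_Re[OF this] show "(\<lambda>k. t^k / fact k * rec2 l a c k) sums Re (Z t)"
      by (simp only: Re_complex_of_real)
  next
    have "(Z \<longlongrightarrow> A * 0 + B' * 0) at_top" unfolding Z_def
      by (intro tendsto_intros cexp_lim root_re_neg[OF root1 l] root_re_neg[OF root2 l])
    from tendsto_Re[OF this] show "((\<lambda>t. Re (Z t)) \<longlongrightarrow> 0) at_top" by simp
  qed
qed



context spec begin

lemma pr_lin: "pr b x y = x *\<^sub>R join b 0 + y *\<^sub>R join 0 b"
  by (simp add: pr_def join_scale join_add)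

lemma sums_pr: "f sums a \<Longrightarrow> g sums c \<Longrightarrow> (\<lambda>k. pr b (f k) (g k)) sums pr b a c"
  unfolding pr_lin by (intro sums_add sums_scaleR_left)

lemma tendsto_pr: "(f \<longlongrightarrow> a) F \<Longrightarrow> (g \<longlongrightarrow> c) F \<Longrightarrow> ((\<lambda>t. pr b (f t) (g t)) \<longlongrightarrow> pr b a c) F"
  unfolding pr_lin by (intro tendsto_intros)

lemma pr_scale: "c *\<^sub>R pr b x y = pr b (c * x) (c * y)"
  by (simp add: pr_def join_scale)

lemma Re_ofr: "Re (complex_of_real r * z) = r * Re z" by simp
lemma Im_ofr: "Im (complex_of_real r * z) = r * Im z" by simp

lemma exp_complex:
  assumes M: "\<And>\<alpha> \<beta>. M *v pr b \<alpha> \<beta> = pr b (Re (\<mu> * Complex \<alpha> \<beta>)) (Im (\<mu> * Complex \<alpha> \<beta>))"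
  shows "mat_exp (t *\<^sub>R M) *v pr b \<alpha> \<beta> =
    pr b (Re (exp (complex_of_real t * \<mu>) * Complex \<alpha> \<beta>)) (Im (exp (complex_of_real t * \<mu>) * Complex \<alpha> \<beta>))"
proof -
  define w where "w = Complex \<alpha> \<beta>"
  have pw: "mat_pow M k *v pr b \<alpha> \<beta> = pr b (Re (\<mu>^k * w)) (Im (\<mu>^k * w))" for k
  proof (induction k)
    case 0 show ?case by (simp add: w_def)
  next
    case (Suc k)
    have "mat_pow M (Suc k) *v pr b \<alpha> \<beta> = M *v (mat_pow M k *v pr b \<alpha> \<beta>)"
      by (simp add: matrix_vector_mul_assoc)
    also have "\<dots> = pr b (Re (\<mu> * (\<mu>^k * w))) (Im (\<mu> * (\<mu>^k * w)))"
      unfolding Suc M complex_surj ..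
    finally show ?case by (simp add: mult.assoc)
  qed
  have S: "(\<lambda>k. complex_of_real (t^k / fact k) * \<mu>^k * w) sums (exp (complex_of_real t * \<mu>) * w)"
    by (rule sums_mult2[OF cexp_sums])
  have S2: "(\<lambda>k. pr b (Re (complex_of_real (t^k / fact k) * \<mu>^k * w)) (Im (complex_of_real (t^k / fact k) * \<mu>^k * w)))
      sums pr b (Re (exp (complex_of_real t * \<mu>) * w)) (Im (exp (complex_of_real t * \<mu>) * w))"
    by (intro sums_pr sums_Re sums_Im S)
  have eq: "(t^k / fact k) *\<^sub>R (mat_pow M k *v pr b \<alpha> \<beta>) =
      pr b (Re (complex_of_real (t^k / fact k) * \<mu>^k * w)) (Im (complex_of_real (t^k / fact k) * \<mu>^k * w))" for k
    by (simp only: pw pr_scale mult.assoc Re_ofr Im_ofr)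
  show ?thesis unfolding w_def[symmetric]
    by (rule mat_exp_eqI) (simp only: eq S2)
qed

lemma exp_rot:
  assumes M: "\<And>\<alpha> \<beta>. M *v pr b \<alpha> \<beta> = pr b \<beta> (- \<alpha>)"
  shows "mat_exp (t *\<^sub>R M) *v pr b \<alpha> \<beta> = pr b (cos t * \<alpha> + sin t * \<beta>) (- sin t * \<alpha> + cos t * \<beta>)"
proof -
  have M': "M *v pr b \<alpha> \<beta> = pr b (Re (- \<i> * Complex \<alpha> \<beta>)) (Im (- \<i> * Complex \<alpha> \<beta>))" for \<alpha> \<beta>
    using M by simp
  have e: "exp (complex_of_real t * - \<i>) = cis (- t)"
    by (simp add: cis_conv_exp mult.commute)
  show ?thesis unfolding exp_complex[OF M'] e by simp
qed

lemma exp_decay_complex: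
  assumes M: "\<And>\<alpha> \<beta>. M *v pr b \<alpha> \<beta> = pr b (Re (\<mu> * Complex \<alpha> \<beta>)) (Im (\<mu> * Complex \<alpha> \<beta>))"
    and mu: "Re \<mu> < 0"
  shows "((\<lambda>t. mat_exp (t *\<^sub>R M) *v pr b \<alpha> \<beta>) \<longlongrightarrow> 0) at_top"
proof -
  have "((\<lambda>t. exp (complex_of_real t * \<mu>) * Complex \<alpha> \<beta>) \<longlongrightarrow> 0 * Complex \<alpha> \<beta>) at_top"
    by (intro tendsto_intros cexp_lim mu)
  then have c0: "((\<lambda>t. exp (complex_of_real t * \<mu>) * Complex \<alpha> \<beta>) \<longlongrightarrow> 0) at_top" by simp
  have "((\<lambda>t. pr b (Re (exp (complex_of_real t * \<mu>) * Complex \<alpha> \<beta>)) (Im (exp (complex_of_real t * \<mu>) * Complex \<alpha> \<beta>)))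
     \<longlongrightarrow> pr b (Re 0) (Im 0)) at_top"
    by (intro tendsto_pr tendsto_Re tendsto_Im c0)
  then show ?thesis unfolding exp_complex[OF M] by (simp add: pr_zero)
qed

lemma G_pow: "b \<in> B \<Longrightarrow> mat_pow G k *v pr b \<alpha> \<beta> = pr b (rec2 (lam b) \<alpha> \<beta> k) (rec2 (lam b) \<alpha> \<beta> (Suc k))"
proof (induction k)
  case 0 then show ?case by simp
next
  case (Suc k)
  have "mat_pow G (Suc k) *v pr b \<alpha> \<beta> = G *v (mat_pow G k *v pr b \<alpha> \<beta>)"
    by (simp add: matrix_vector_mul_assoc)
  also have "\<dots> = pr b (rec2 (lam b) \<alpha> \<beta> (Suc k)) (rec2 (lam b) \<alpha> \<beta> (Suc (Suc k)))"
    using Suc by (simp add: G_pr)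
  finally show ?case .
qed

lemma exp_decay_G:
  assumes b: "b \<in> B" and l: "lam b > 0"
  shows "((\<lambda>t. mat_exp (t *\<^sub>R G) *v pr b \<alpha> \<beta>) \<longlongrightarrow> 0) at_top"
proof -
  obtain F1 where F1: "\<And>t. (\<lambda>k. (t^k / fact k) * rec2 (lam b) \<alpha> \<beta> k) sums F1 t" "(F1 \<longlongrightarrow> 0) at_top"
    using rec_exp[OF l, of \<alpha> \<beta>] by blast
  obtain F2 where F2: "\<And>t. (\<lambda>k. (t^k / fact k) * rec2 (lam b) \<beta> (- \<alpha> - lam b * \<beta>) k) sums F2 t" "(F2 \<longlongrightarrow> 0) at_top"
    using rec_exp[OF l, of \<beta> "- \<alpha> - lam b * \<beta>"] by blast
  have ex: "mat_exp (t *\<^sub>R G) *v pr b \<alpha> \<beta> = pr b (F1 t) (F2 t)" for t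
  proof (rule mat_exp_eqI)
    have eq: "(t^k / fact k) *\<^sub>R (mat_pow G k *v pr b \<alpha> \<beta>) =
       pr b ((t^k / fact k) * rec2 (lam b) \<alpha> \<beta> k) ((t^k / fact k) * rec2 (lam b) \<beta> (- \<alpha> - lam b * \<beta>) k)" for k
      using b by (simp add: G_pow pr_scale rec2_shift)
    show "(\<lambda>k. (t^k / fact k) *\<^sub>R (mat_pow G k *v pr b \<alpha> \<beta>)) sums pr b (F1 t) (F2 t)"
      by (simp only: eq) (intro sums_pr F1 F2)
  qed
  have "((\<lambda>t. pr b (F1 t) (F2 t)) \<longlongrightarrow> pr b 0 0) at_top" by (intro tendsto_pr F1 F2)
  then show ?thesis unfolding ex by (simp add: pr_zero)
qed

lemma sq0: "sq 0 = 2"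
  unfolding sq_def by (rule real_sqrt_unique) auto

lemma G_rot: "b \<in> B \<Longrightarrow> lam b = 0 \<Longrightarrow> G *v pr b \<alpha> \<beta> = pr b \<beta> (- \<alpha>)"
  by (simp add: G_pr)

lemma Um_rot: "b \<in> B \<Longrightarrow> lam b = 0 \<Longrightarrow> Um *v pr b \<alpha> \<beta> = pr b \<beta> (- \<alpha>)"
  by (simp add: Um_pr sq0)

lemma Um_complex: "b \<in> B \<Longrightarrow> Um *v pr b \<alpha> \<beta> =
    pr b (Re (Complex (- lam b / sq (lam b)) (- 2 / sq (lam b)) * Complex \<alpha> \<beta>))
         (Im (Complex (- lam b / sq (lam b)) (- 2 / sq (lam b)) * Complex \<alpha> \<beta>))"
  by (simp add: Um_pr algebra_simps)

lemma exp_decay_Um: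
  assumes b: "b \<in> B" and l: "lam b > 0"
  shows "((\<lambda>t. mat_exp (t *\<^sub>R Um) *v pr b \<alpha> \<beta>) \<longlongrightarrow> 0) at_top"
proof (rule exp_decay_complex[OF Um_complex[OF b]])
  show "Re (Complex (- lam b / sq (lam b)) (- 2 / sq (lam b))) < 0"
    using l sq_pos[of "lam b"] by simp
qed

lemma final:
  assumes rot: "\<And>b \<alpha> \<beta> t. b \<in> B \<Longrightarrow> lam b = 0 \<Longrightarrow>
      mat_exp (t *\<^sub>R M) *v pr b \<alpha> \<beta> = pr b (cos t * \<alpha> + sin t * \<beta>) (- sin t * \<alpha> + cos t * \<beta>)"
    and dec: "\<And>b \<alpha> \<beta>. b \<in> B \<Longrightarrow> lam b \<noteq> 0 \<Longrightarrow> ((\<lambda>t. mat_exp (t *\<^sub>R M) *v pr b \<alpha> \<beta>) \<longlongrightarrow> 0) at_top"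
  shows "((\<lambda>t. mat_exp (t *\<^sub>R M) *v y0 - y_tilde y0 t) \<longlongrightarrow> 0) at_top"
proof -
  define x where "x = xp y0"
  define v where "v = vp y0"
  define B0 where "B0 = {b\<in>B. lam b = 0}"
  define B1 where "B1 = {b\<in>B. lam b \<noteq> 0}"
  have BU: "B = B0 \<union> B1" and BD: "B0 \<inter> B1 = {}" and f0: "finite B0" and f1: "finite B1"
    using finB by (auto simp: B0_def B1_def)
  define n where "n = real CARD('n)"
  define Px where "Px = ((\<Sum>i\<in>UNIV. x$i) / n) *\<^sub>R (one_vec::real^'n)"
  define Pv where "Pv = ((\<Sum>i\<in>UNIV. v$i) / n) *\<^sub>R (one_vec::real^'n)"
  have y0d: "y0 = (\<Sum>b\<in>B. pr b (b \<bullet> x) (b \<bullet> v))" unfolding x_def v_def by (rule decomp)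
  have split: "mat_exp (t *\<^sub>R M) *v y0 =
      (\<Sum>b\<in>B0. mat_exp (t *\<^sub>R M) *v pr b (b \<bullet> x) (b \<bullet> v)) +
      (\<Sum>b\<in>B1. mat_exp (t *\<^sub>R M) *v pr b (b \<bullet> x) (b \<bullet> v))" for t
    by (subst y0d, subst mv_sum, subst BU, rule sum.union_disjoint[OF f0 f1 BD])
  have rotsum: "(\<Sum>b\<in>B0. mat_exp (t *\<^sub>R M) *v pr b (b \<bullet> x) (b \<bullet> v)) = y_tilde y0 t" for t
  proof -
    have "(\<Sum>b\<in>B0. mat_exp (t *\<^sub>R M) *v pr b (b \<bullet> x) (b \<bullet> v)) =
        (\<Sum>b\<in>B0. pr b (cos t * (b \<bullet> x) + sin t * (b \<bullet> v)) (- sin t * (b \<bullet> x) + cos t * (b \<bullet> v)))"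
      by (intro sum.cong refl rot) (auto simp: B0_def)
    also have "\<dots> = join (\<Sum>b\<in>B0. (cos t * (b \<bullet> x) + sin t * (b \<bullet> v)) *\<^sub>R b)
                         (\<Sum>b\<in>B0. (- sin t * (b \<bullet> x) + cos t * (b \<bullet> v)) *\<^sub>R b)"
      unfolding pr_def join_sum ..
    also have "(\<Sum>b\<in>B0. (cos t * (b \<bullet> x) + sin t * (b \<bullet> v)) *\<^sub>R b) =
        cos t *\<^sub>R (\<Sum>b\<in>B0. (b \<bullet> x) *\<^sub>R b) + sin t *\<^sub>R (\<Sum>b\<in>B0. (b \<bullet> v) *\<^sub>R b)"
      by (simp add: scaleR_add_left sum.distrib scaleR_sum_right)
    also have "(\<Sum>b\<in>B0. (- sin t * (b \<bullet> x) + cos t * (b \<bullet> v)) *\<^sub>R b) =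
        (- sin t) *\<^sub>R (\<Sum>b\<in>B0. (b \<bullet> x) *\<^sub>R b) + cos t *\<^sub>R (\<Sum>b\<in>B0. (b \<bullet> v) *\<^sub>R b)"
      by (simp only: scaleR_sum_right scaleR_scaleR sum.distrib[symmetric] scaleR_add_left)
    also have "(\<Sum>b\<in>B0. (b \<bullet> x) *\<^sub>R b) = Px" unfolding B0_def Px_def n_def by (rule P0)
    also have "(\<Sum>b\<in>B0. (b \<bullet> v) *\<^sub>R b) = Pv" unfolding B0_def Pv_def n_def by (rule P0)
    also have "join (cos t *\<^sub>R Px + sin t *\<^sub>R Pv) ((- sin t) *\<^sub>R Px + cos t *\<^sub>R Pv) = y_tilde y0 t"
    proof (subst vec_eq_iff, intro allI)
      fix a :: "'n + 'n"
      show "join (cos t *\<^sub>R Px + sin t *\<^sub>R Pv) ((- sin t) *\<^sub>R Px + cos t *\<^sub>R Pv) $ a = y_tilde y0 t $ a"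
        by (cases a) (simp_all add: y_tilde_def Let_def Px_def Pv_def x_def v_def n_def add_divide_distrib
            diff_divide_distrib)
    qed
    finally show ?thesis .
  qed
  have "((\<lambda>t. \<Sum>b\<in>B1. mat_exp (t *\<^sub>R M) *v pr b (b \<bullet> x) (b \<bullet> v)) \<longlongrightarrow> 0) at_top"
    by (intro tendsto_null_sum dec) (auto simp: B1_def)
  moreover have "mat_exp (t *\<^sub>R M) *v y0 - y_tilde y0 t = (\<Sum>b\<in>B1. mat_exp (t *\<^sub>R M) *v pr b (b \<bullet> x) (b \<bullet> v))" for t
    using split[of t] rotsum[of t] by simp
  ultimately show ?thesis by simp
qed

lemma main_G: "((\<lambda>t. mat_exp (t *\<^sub>R G) *v y0 - y_tilde y0 t) \<longlongrightarrow> 0) at_top"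
proof (rule final)
  fix b \<alpha> \<beta> t assume "b \<in> B" "lam b = 0"
  then show "mat_exp (t *\<^sub>R G) *v pr b \<alpha> \<beta> = pr b (cos t * \<alpha> + sin t * \<beta>) (- sin t * \<alpha> + cos t * \<beta>)"
    by (intro exp_rot G_rot)
next
  fix b \<alpha> \<beta> assume "b \<in> B" "lam b \<noteq> 0"
  then show "((\<lambda>t. mat_exp (t *\<^sub>R G) *v pr b \<alpha> \<beta>) \<longlongrightarrow> 0) at_top"
    using lam_nonneg[of b] by (intro exp_decay_G) auto
qed

lemma main_U: "((\<lambda>t. mat_exp (t *\<^sub>R polar_U G) *v y0 - y_tilde y0 t) \<longlongrightarrow> 0) at_top"
  unfolding polar_U_eq
proof (rule final)
  fix b \<alpha> \<beta> t assume "b \<in> B" "lam b = 0"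
  then show "mat_exp (t *\<^sub>R Um) *v pr b \<alpha> \<beta> = pr b (cos t * \<alpha> + sin t * \<beta>) (- sin t * \<alpha> + cos t * \<beta>)"
    by (intro exp_rot Um_rot)
next
  fix b \<alpha> \<beta> assume "b \<in> B" "lam b \<noteq> 0"
  then show "((\<lambda>t. mat_exp (t *\<^sub>R Um) *v pr b \<alpha> \<beta>) \<longlongrightarrow> 0) at_top"
    using lam_nonneg[of b] by (intro exp_decay_Um) auto
qed

end


theorem proposition2:
  fixes E :: "'n::finite \<Rightarrow> 'n \<Rightarrow> bool"
    and y0 :: "real^('n + 'n)"
  assumes "CARD('n) \<ge> 2"
    and "\<And>i j. E i j \<longleftrightarrow> E j i"
    and "\<And>i. \<not> E i i"
    and "\<And>i j. (i, j) \<in> {(a, b). E a b}\<^sup>*"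
  shows "((\<lambda>t. mat_exp (t *\<^sub>R block_G (laplacian E)) *v y0 - y_tilde y0 t) \<longlongrightarrow> 0) at_top \<and>
         ((\<lambda>t. mat_exp (t *\<^sub>R polar_U (block_G (laplacian E))) *v y0 - y_tilde y0 t) \<longlongrightarrow> 0) at_top"
proof -
  interpret graph E using assms(2,4) by unfold_locales auto
  obtain B where B: "finite B" "\<forall>b\<in>B. norm b = 1" "\<forall>b\<in>B. \<forall>c\<in>B. b \<noteq> c \<longrightarrow> b \<bullet> c = 0"
    "\<forall>b\<in>B. laplacian E *v b = (b \<bullet> (laplacian E *v b)) *\<^sub>R b" "\<And>x. x = (\<Sum>b\<in>B. (b \<bullet> x) *\<^sub>R b)"
    using spectral[OF L_sym] by blast
  interpret spec E B using B by unfold_locales auto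
  show ?thesis using main_G main_U by blast
qed


end
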